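(* Let $\mu\in(0,1)$ and $\Lambda>0$. For every $x>0$, $$\int_0^\infty\theta_\mu\big(e^{-\Lambda u}\big)e^{-ux}\,du=\frac1\Lambda\,\frac{\pi\sin(\pi\mu)}{\cos\!\big(\pi\sqrt{\mu^2-\tfrac{4x}{\Lambda}}\big)-\cos(\pi\mu)}.$$
   Context: $\theta_\mu(q):=\sum_{n\in\mathbb Z}\big(n+\frac\mu2\big)q^{n(n+\mu)}$ for $|q|<1$. The expression $\cos(\pi\sqrt z)$ denotes the entire function $\sum_{n\ge0}(-\pi^2z)^n/(2n)!$. *)

theory Defs
  imports "HOL-Analysis.Analysis"
begin

definition theta_mu :: "real \<Rightarrow> real \<Rightarrow> real" where
  "theta_mu \<mu> q = (\<Sum>\<^sub>\<infinity>n::int. (of_int n + \<mu> / 2) * q powr (of_int n * (of_int n + \<mu>)))"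

text \<open>The entire function cos(pi sqrt z) = sum_n (-pi^2 z)^n / (2n)!, on real arguments.\<close>
definition cos_pi_sqrt :: "real \<Rightarrow> real" where
  "cos_pi_sqrt z = (\<Sum>n. (- (pi\<^sup>2) * z) ^ n / fact (2 * n))"

end

theory Submission
  imports Defs "HOL-Analysis.Analysis"
begin


lemma digamma_refl:
  fixes z :: complex
  assumes z: "z \<notin> \<int>"
  shows "Digamma (1 - z) - Digamma z = of_real pi * cot (of_real pi * z)"
proof -
  have z1: "z \<notin> \<int>\<^sub>\<le>\<^sub>0" using z nonpos_Ints_subset_Ints by blast
  have z2: "1 - z \<notin> \<int>\<^sub>\<le>\<^sub>0"
    using z nonpos_Ints_subset_Ints Ints_diff[of 1 "1-z"] by auto
  have s: "sin (of_real pi * z) \<noteq> 0" using z by (subst sin_eq_0) auto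
  have G: "Gamma z * Gamma (1 - z) = of_real pi / sin (of_real pi * z)"
    by (rule Gamma_reflection_complex)
  have d1: "((\<lambda>w. Gamma w * Gamma (1 - w)) has_field_derivative
     (Gamma z * Digamma z * Gamma (1 - z) + Gamma z * (Gamma (1 - z) * Digamma (1 - z) * (-1)))) (at z)"
    using z1 z2 by (auto intro!: derivative_eq_intros)
  have d2: "((\<lambda>w. of_real pi / sin (of_real pi * w)) has_field_derivative
     (- (of_real pi * (cos (of_real pi * z) * of_real pi)) / (sin (of_real pi * z))^2)) (at z)"
    using s by (auto intro!: derivative_eq_intros simp: power2_eq_square)
  have eq: "(\<lambda>w::complex. Gamma w * Gamma (1 - w)) = (\<lambda>w. of_real pi / sin (of_real pi * w))"
    using Gamma_reflection_complex by auto
  have "Gamma z * Digamma z * Gamma (1 - z) + Gamma z * (Gamma (1 - z) * Digamma (1 - z) * (-1))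
     = - (of_real pi * (cos (of_real pi * z) * of_real pi)) / (sin (of_real pi * z))^2"
    using DERIV_unique[OF d1] d2 eq by simp
  hence "of_real pi / sin (of_real pi * z) * (Digamma z - Digamma (1 - z))
     = - (of_real pi * (cos (of_real pi * z) * of_real pi)) / (sin (of_real pi * z))^2"
  proof -
    have "of_real pi / sin (of_real pi * z) * (Digamma z - Digamma (1 - z))
        = Gamma z * Gamma (1 - z) * (Digamma z - Digamma (1 - z))" using G by simp
    also have "\<dots> = Gamma z * Digamma z * Gamma (1 - z) + Gamma z * (Gamma (1 - z) * Digamma (1 - z) * (-1))"
      by (simp add: algebra_simps)
    finally show ?thesis using \<open>Gamma z * Digamma z * Gamma (1 - z) + _ = _\<close> by simp
  qed
  hence "Digamma z - Digamma (1 - z) = - of_real pi * cos (of_real pi * z) / sin (of_real pi * z)"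
  proof -
    have P: "(of_real pi :: complex) \<noteq> 0" by simp
    have "\<And>X P s c :: complex. P \<noteq> 0 \<Longrightarrow> s \<noteq> 0 \<Longrightarrow> P / s * X = - (P * (c * P)) / s^2 \<Longrightarrow> X = - P * c / s"
    proof -
      fix X P s c :: complex assume a: "P \<noteq> 0" "s \<noteq> 0" "P / s * X = - (P * (c * P)) / s^2"
      have "X = (s / P) * (P / s * X)" using a(1,2) by simp
      also have "\<dots> = (s / P) * (- (P * (c * P)) / s^2)" by (simp only: a(3))
      also have "\<dots> = - P * c / s" using a by (simp add: field_simps power2_eq_square)
      finally show "X = - P * c / s" .
    qed
    from this[OF P s \<open>of_real pi / sin (of_real pi * z) * (Digamma z - Digamma (1 - z)) = _\<close>]
    show ?thesis .
  qed
  thus ?thesis by (simp add: cot_def algebra_simps)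
qed



lemma cos_paired_gen: "(\<lambda>n. (- 1) ^ n / (fact (2 * n)) * x ^ (2 * n)) sums cos x"
  for x :: complex
proof -
  have "(\<lambda>n. \<Sum>k = n * 2..<n * 2 + 2. cos_coeff k *\<^sub>R x ^ k) sums cos x"
    by (rule sums_group) (use cos_converges [of x] in auto)
  then show ?thesis
    by (simp add: cos_coeff_def ac_simps scaleR_conv_of_real)
qed

lemma cos_pi_sqrt_complex:
  fixes a :: complex and c :: real
  assumes "a^2 = of_real c"
  shows "cos (2 * of_real pi * a) = of_real (cos_pi_sqrt (4 * c))"
proof -
  have e: "(- 1) ^ n / (fact (2 * n)) * (2 * of_real pi * a) ^ (2 * n)
      = of_real ((- (pi\<^sup>2) * (4 * c)) ^ n / fact (2 * n))" for n
  proof -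
    have "(2 * of_real pi * a) ^ (2 * n) = ((2 * of_real pi * a)^2) ^ n"
      by (simp add: power_mult)
    also have "(2 * of_real pi * a)^2 = of_real (4 * pi^2 * c)"
      using assms by (simp add: power_mult_distrib)
    finally have "(2 * of_real pi * a) ^ (2 * n) = of_real ((4 * pi^2 * c)^n)" by simp
    moreover have "(- (pi\<^sup>2) * (4 * c)) ^ n = (-1)^n * (4 * pi^2 * c)^n"
    proof -
      have "- (pi\<^sup>2) * (4 * c) = (-1) * (4 * pi^2 * c)" by simp
      thus ?thesis by (simp only: power_mult_distrib)
    qed
    ultimately show ?thesis by simp
  qed
  have "(\<lambda>n. of_real ((- (pi\<^sup>2) * (4 * c)) ^ n / fact (2 * n)) :: complex) sums cos (2 * of_real pi * a)"
    using cos_paired_gen[of "2 * of_real pi * a"] by (simp only: e)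
  moreover have "summable (\<lambda>n. (- (pi\<^sup>2) * (4 * c)) ^ n / fact (2 * n))"
    using calculation summable_of_real_iff sums_summable by blast
  hence "(\<lambda>n. of_real ((- (pi\<^sup>2) * (4 * c)) ^ n / fact (2 * n)) :: complex) sums of_real (cos_pi_sqrt (4 * c))"
    unfolding cos_pi_sqrt_def by (subst sums_of_real_iff) (rule summable_sums)
  ultimately show ?thesis using sums_unique2 by blast
qed



lemma cot_series:
  fixes b :: complex
  assumes b: "b \<notin> \<int>"
  shows "(\<lambda>k. 1 / (b + of_nat k) - 1 / (of_nat k + 1 - b)) sums (of_real pi * cot (of_real pi * b))"
proof -
  have b0: "b \<noteq> 0" using b by auto
  have b1: "1 - b \<noteq> 0" using b by auto
  have s1: "(\<lambda>k. inverse (of_nat (Suc k)) - inverse (b + of_nat k)) sums (Digamma b + euler_mascheroni)"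
    using summable_Digamma[OF b0] by (simp add: Digamma_def summable_sums)
  have s2: "(\<lambda>k. inverse (of_nat (Suc k)) - inverse ((1 - b) + of_nat k)) sums (Digamma (1 - b) + euler_mascheroni)"
    using summable_Digamma[OF b1] by (simp add: Digamma_def summable_sums)
  have "(\<lambda>k. (inverse (of_nat (Suc k)) - inverse ((1 - b) + of_nat k)) - (inverse (of_nat (Suc k)) - inverse (b + of_nat k)))
     sums ((Digamma (1 - b) + euler_mascheroni) - (Digamma b + euler_mascheroni))"
    by (rule sums_diff[OF s2 s1])
  moreover have "(\<lambda>k. (inverse (of_nat (Suc k)) - inverse ((1 - b) + of_nat k)) - (inverse (of_nat (Suc k)) - inverse (b + of_nat k)))
     = (\<lambda>k. 1 / (b + of_nat k) - 1 / (of_nat k + 1 - b))"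
    by (rule ext) (simp add: divide_inverse algebra_simps)
  moreover have "(Digamma (1 - b) + euler_mascheroni) - (Digamma b + euler_mascheroni) = of_real pi * cot (of_real pi * b)"
    using digamma_refl[OF b] by simp
  ultimately show ?thesis by simp
qed



lemma has_integral_open_half:
  fixes f :: "real \<Rightarrow> real"
  shows "(f has_integral I) {0..} \<longleftrightarrow> (f has_integral I) {0<..}"
proof (rule has_integral_spike_set_eq)
  show "negligible {x \<in> {0..} - {0<..}. f x \<noteq> 0}"
    by (rule negligible_subset[OF negligible_sing[of "0::real"]]) auto
  show "negligible {x \<in> {0<..} - {0..}. f x \<noteq> 0}"
    by (rule negligible_subset[OF negligible_sing[of "0::real"]]) auto
qed

lemma exp_int:
  fixes c :: real
  assumes "c > 0"
  shows "((\<lambda>u. exp (- c * u)) has_integral (1 / c)) {0<..}"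
  using has_integral_exp_minus_to_infinity[OF assms, of 0] has_integral_open_half by simp

lemma summable_n_geom:
  fixes r :: real
  assumes "0 \<le> r" "r < 1"
  shows "summable (\<lambda>k. (real k + 2) * r ^ k)"
proof -
  define s where "s = sqrt r"
  have s0: "0 \<le> s" and s1: "s < 1" using assms by (auto simp: s_def)
  have rs: "r ^ k = s ^ k * s ^ k" for k
    using assms by (simp add: s_def flip: power_mult_distrib)
  have "(\<lambda>n. of_nat n * s ^ n) \<longlonglongrightarrow> (0::real)"
    by (rule powser_times_n_limit_0) (use s0 s1 in simp)
  hence ev: "eventually (\<lambda>n. real n * s ^ n < 1) sequentially"
    by (rule order_tendstoD) simp
  have sm: "summable (\<lambda>k. s ^ k + 2 * r ^ k)"
    using s0 s1 assms by (intro summable_add summable_mult summable_geometric) auto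
  show ?thesis
  proof (rule summable_comparison_test_ev[OF _ sm])
    show "eventually (\<lambda>k. norm ((real k + 2) * r ^ k) \<le> s ^ k + 2 * r ^ k) sequentially"
      using ev
    proof eventually_elim
      case (elim k)
      have "norm ((real k + 2) * r ^ k) = real k * s ^ k * s ^ k + 2 * r ^ k"
        using assms by (simp add: rs algebra_simps)
      also have "real k * s ^ k * s ^ k \<le> 1 * s ^ k"
        using elim s0 by (intro mult_right_mono) auto
      finally show ?case by simp
    qed
  qed
qed



definition Ak :: "real \<Rightarrow> real \<Rightarrow> real \<Rightarrow> nat \<Rightarrow> real" where
  "Ak \<mu> \<Lambda> x k = \<Lambda> * real k * (real k + \<mu>) + x"
definition Bk :: "real \<Rightarrow> real \<Rightarrow> real \<Rightarrow> nat \<Rightarrow> real" where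
  "Bk \<mu> \<Lambda> x k = \<Lambda> * (real k + 1) * (real k + 1 - \<mu>) + x"
definition gk :: "real \<Rightarrow> real \<Rightarrow> real \<Rightarrow> nat \<Rightarrow> real \<Rightarrow> real" where
  "gk \<mu> \<Lambda> x k u = (real k + \<mu>/2) * exp (- Ak \<mu> \<Lambda> x k * u) - (real k + 1 - \<mu>/2) * exp (- Bk \<mu> \<Lambda> x k * u)"
definition dk :: "real \<Rightarrow> real \<Rightarrow> real \<Rightarrow> nat \<Rightarrow> real \<Rightarrow> real" where
  "dk \<mu> \<Lambda> x k u = (1 - \<mu>) * exp (- Ak \<mu> \<Lambda> x k * u) + (real k + 1 - \<mu>/2) * (exp (- Ak \<mu> \<Lambda> x k * u) - exp (- Bk \<mu> \<Lambda> x k * u))"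
definition Ik :: "real \<Rightarrow> real \<Rightarrow> real \<Rightarrow> nat \<Rightarrow> real" where
  "Ik \<mu> \<Lambda> x k = (real k + \<mu>/2) / Ak \<mu> \<Lambda> x k - (real k + 1 - \<mu>/2) / Bk \<mu> \<Lambda> x k"
definition Dk :: "real \<Rightarrow> real \<Rightarrow> real \<Rightarrow> nat \<Rightarrow> real" where
  "Dk \<mu> \<Lambda> x k = (1 - \<mu>) / Ak \<mu> \<Lambda> x k + (real k + 1 - \<mu>/2) * (1 / Ak \<mu> \<Lambda> x k - 1 / Bk \<mu> \<Lambda> x k)"

context
  fixes \<mu> \<Lambda> x :: real
  assumes mu0: "0 < \<mu>" and mu1: "\<mu> < 1" and L0: "0 < \<Lambda>" and x0: "0 < x"
begin

lemma A_ge: "Ak \<mu> \<Lambda> x k \<ge> \<Lambda> * real k * real k + x"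
proof -
  have "\<Lambda> * real k * real k \<le> \<Lambda> * real k * (real k + \<mu>)"
    using L0 mu0 by (intro mult_left_mono) auto
  thus ?thesis by (simp add: Ak_def)
qed

lemma A_pos: "Ak \<mu> \<Lambda> x k > 0"
  using A_ge[of k] L0 x0 by (smt (verit) mult_nonneg_nonneg of_nat_0_le_iff)

lemma BA: "Bk \<mu> \<Lambda> x k - Ak \<mu> \<Lambda> x k = \<Lambda> * (2 * real k + 1) * (1 - \<mu>)"
  by (simp add: Ak_def Bk_def algebra_simps)

lemma B_ge_A: "Bk \<mu> \<Lambda> x k \<ge> Ak \<mu> \<Lambda> x k"
  using BA[of k] L0 mu1 by (smt (verit) mult_pos_pos of_nat_0_le_iff)

lemma B_pos: "Bk \<mu> \<Lambda> x k > 0"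
  using A_pos B_ge_A by (meson less_le_trans)

lemma beta_pos: "real k + 1 - \<mu>/2 > 0" using mu1 by simp

lemma g_le_d:
  assumes "0 \<le> u"
  shows "\<bar>gk \<mu> \<Lambda> x k u\<bar> \<le> dk \<mu> \<Lambda> x k u" "0 \<le> dk \<mu> \<Lambda> x k u"
proof -
  have e: "exp (- Bk \<mu> \<Lambda> x k * u) \<le> exp (- Ak \<mu> \<Lambda> x k * u)"
    using B_ge_A[of k] assms by (simp add: mult_right_mono)
  have g: "gk \<mu> \<Lambda> x k u = (\<mu> - 1) * exp (- Ak \<mu> \<Lambda> x k * u) + (real k + 1 - \<mu>/2) * (exp (- Ak \<mu> \<Lambda> x k * u) - exp (- Bk \<mu> \<Lambda> x k * u))"
    by (simp add: gk_def algebra_simps)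
  have p: "0 \<le> (real k + 1 - \<mu>/2) * (exp (- Ak \<mu> \<Lambda> x k * u) - exp (- Bk \<mu> \<Lambda> x k * u))"
    using e beta_pos[of k] by simp
  have q: "0 \<le> (1 - \<mu>) * exp (- Ak \<mu> \<Lambda> x k * u)" using mu1 by simp
  have ab: "\<bar>(\<mu> - 1) * exp (- Ak \<mu> \<Lambda> x k * u)\<bar> = (1 - \<mu>) * exp (- Ak \<mu> \<Lambda> x k * u)"
    using mu1 by (simp add: abs_mult)
  show "\<bar>gk \<mu> \<Lambda> x k u\<bar> \<le> dk \<mu> \<Lambda> x k u" unfolding g dk_def using p ab
    by (smt (verit) abs_triangle_ineq)
  show "0 \<le> dk \<mu> \<Lambda> x k u" unfolding dk_def using p q by simp
qed

lemma g_int: "(gk \<mu> \<Lambda> x k has_integral Ik \<mu> \<Lambda> x k) {0<..}"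
proof -
  have "((\<lambda>u. (real k + \<mu>/2) * exp (- Ak \<mu> \<Lambda> x k * u) - (real k + 1 - \<mu>/2) * exp (- Bk \<mu> \<Lambda> x k * u))
     has_integral ((real k + \<mu>/2) * (1 / Ak \<mu> \<Lambda> x k) - (real k + 1 - \<mu>/2) * (1 / Bk \<mu> \<Lambda> x k))) {0<..}"
    by (intro has_integral_diff has_integral_mult_right exp_int A_pos B_pos)
  thus ?thesis unfolding gk_def[abs_def] Ik_def by simp
qed

lemma d_int: "(dk \<mu> \<Lambda> x k has_integral Dk \<mu> \<Lambda> x k) {0<..}"
proof -
  have "((\<lambda>u. (1 - \<mu>) * exp (- Ak \<mu> \<Lambda> x k * u) + (real k + 1 - \<mu>/2) * (exp (- Ak \<mu> \<Lambda> x k * u) - exp (- Bk \<mu> \<Lambda> x k * u)))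
     has_integral ((1 - \<mu>) * (1 / Ak \<mu> \<Lambda> x k) + (real k + 1 - \<mu>/2) * (1 / Ak \<mu> \<Lambda> x k - 1 / Bk \<mu> \<Lambda> x k))) {0<..}"
    by (intro has_integral_add has_integral_diff has_integral_mult_right exp_int A_pos B_pos)
  thus ?thesis by (simp add: dk_def[abs_def] Dk_def)
qed

lemma D_bound:
  assumes k: "k \<ge> 1"
  shows "Dk \<mu> \<Lambda> x k \<le> 4 / (\<Lambda> * (real k)^2)"
proof -
  define A where "A = Ak \<mu> \<Lambda> x k"
  define B where "B = Bk \<mu> \<Lambda> x k"
  define \<beta> where "\<beta> = real k + 1 - \<mu>/2"
  have kk: "real k \<ge> 1" using k by simp
  have A0: "A > 0" and B0: "B > 0" and AB: "A \<le> B" using A_pos B_pos B_ge_A by (auto simp: A_def B_def)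
  have Ak2: "A \<ge> \<Lambda> * (real k)^2" using A_ge[of k] x0 by (simp add: A_def power2_eq_square)
  have Lk2: "\<Lambda> * (real k)^2 > 0" using L0 kk by simp
  have t1: "(1 - \<mu>) / A \<le> 1 / (\<Lambda> * (real k)^2)"
  proof -
    have "(1 - \<mu>) / A \<le> 1 / A" using mu0 A0 by (simp add: divide_right_mono)
    also have "\<dots> \<le> 1 / (\<Lambda> * (real k)^2)" using Ak2 Lk2 mult_pos_pos[OF A0 Lk2] by (intro divide_left_mono) auto
    finally show ?thesis .
  qed
  have Bge: "B \<ge> \<Lambda> * (real k + 1) * real k"
  proof -
    have "\<Lambda> * (real k + 1) * real k \<le> \<Lambda> * (real k + 1) * (real k + 1 - \<mu>)"
      using L0 mu1 by (intro mult_left_mono) auto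
    thus ?thesis using x0 by (simp add: B_def Bk_def)
  qed
  have bB: "\<beta> / B \<le> 1 / (\<Lambda> * real k)"
  proof -
    have "\<beta> \<le> real k + 1" using mu0 by (simp add: \<beta>_def)
    hence "\<beta> / B \<le> (real k + 1) / B" using B0 by (simp add: divide_right_mono)
    also have "\<dots> \<le> (real k + 1) / (\<Lambda> * (real k + 1) * real k)"
    proof (rule divide_left_mono)
      have p: "\<Lambda> * (real k + 1) * real k > 0" using L0 kk by simp
      show "0 < B * (\<Lambda> * (real k + 1) * real k)" using B0 p by simp
    qed (use Bge in auto)
    also have "\<dots> = 1 / (\<Lambda> * real k)"
    proof -
      have nz: "real k + 1 \<noteq> 0" by simp
      have e: "\<Lambda> * (real k + 1) * real k = (real k + 1) * (\<Lambda> * real k)" by (simp only: ac_simps)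
      show ?thesis unfolding e by (rule nonzero_divide_mult_cancel_left[OF nz])
    qed
    finally show ?thesis .
  qed
  have BAle: "(B - A) / A \<le> 3 / real k"
  proof -
    have "B - A = \<Lambda> * (2 * real k + 1) * (1 - \<mu>)" using BA[of k] by (simp add: A_def B_def)
    also have "\<dots> \<le> \<Lambda> * (3 * real k)"
    proof -
      have "(2 * real k + 1) * (1 - \<mu>) \<le> (2 * real k + 1) * 1" using mu0 by (intro mult_left_mono) auto
      hence "(2 * real k + 1) * (1 - \<mu>) \<le> 2 * real k + 1" by (simp only: mult_1_right)
      hence "(2 * real k + 1) * (1 - \<mu>) \<le> 3 * real k" using kk by linarith
      hence "\<Lambda> * ((2 * real k + 1) * (1 - \<mu>)) \<le> \<Lambda> * (3 * real k)" using L0 by (intro mult_left_mono) auto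
      thus ?thesis by (simp only: mult.assoc)
    qed
    finally have "(B - A) / A \<le> (\<Lambda> * (3 * real k)) / A" using A0 by (simp add: divide_right_mono)
    also have "\<dots> \<le> (\<Lambda> * (3 * real k)) / (\<Lambda> * (real k)^2)"
      using Ak2 Lk2 L0 kk mult_pos_pos[OF A0 Lk2] by (intro divide_left_mono) auto
    also have "\<dots> = 3 / real k" using L0 kk by (simp add: field_simps power2_eq_square)
    finally show ?thesis .
  qed
  have t2: "\<beta> * (1 / A - 1 / B) \<le> 3 / (\<Lambda> * (real k)^2)"
  proof -
    have "\<beta> * (1 / A - 1 / B) = (\<beta> / B) * ((B - A) / A)" using A0 B0 by (simp add: field_simps)
    also have "\<dots> \<le> (1 / (\<Lambda> * real k)) * (3 / real k)"
      using bB BAle A0 B0 AB beta_pos[of k] L0 kk by (intro mult_mono) (auto simp: \<beta>_def)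
    also have "\<dots> = 3 / (\<Lambda> * (real k)^2)" by (simp add: power2_eq_square)
    finally show ?thesis .
  qed
  have "Dk \<mu> \<Lambda> x k = (1 - \<mu>) / A + \<beta> * (1 / A - 1 / B)" by (simp add: Dk_def A_def B_def \<beta>_def)
  also have "\<dots> \<le> 1 / (\<Lambda> * (real k)^2) + 3 / (\<Lambda> * (real k)^2)" using t1 t2 by simp
  finally show ?thesis by simp
qed

lemma D_nonneg: "Dk \<mu> \<Lambda> x k \<ge> 0"
proof -
  have "1 / Bk \<mu> \<Lambda> x k \<le> 1 / Ak \<mu> \<Lambda> x k"
    using A_pos[of k] B_ge_A[of k] mult_pos_pos[OF B_pos[of k] A_pos[of k]] by (intro divide_left_mono) auto
  thus ?thesis unfolding Dk_def using mu1 A_pos[of k] beta_pos[of k] by (intro add_nonneg_nonneg) auto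
qed

lemma D_summable: "summable (Dk \<mu> \<Lambda> x)"
proof -
  have s: "summable (\<lambda>n. inverse (real n ^ 2))" by (rule inverse_power_summable) simp
  have "summable (\<lambda>n. inverse (real (Suc n) ^ 2))"
    using summable_Suc_iff[of "\<lambda>n. inverse (real n ^ 2)", THEN iffD2, OF s] .
  hence "summable (\<lambda>n. (4 / \<Lambda>) * inverse (real (Suc n) ^ 2))" by (rule summable_mult)
  hence "summable (\<lambda>n. Dk \<mu> \<Lambda> x (Suc n))"
  proof (rule summable_comparison_test'[where N=0])
    fix n :: nat
    have "Dk \<mu> \<Lambda> x (Suc n) \<le> 4 / (\<Lambda> * (real (Suc n))^2)" by (rule D_bound) simp
    thus "norm (Dk \<mu> \<Lambda> x (Suc n)) \<le> (4 / \<Lambda>) * inverse (real (Suc n) ^ 2)"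
      using D_nonneg[of "Suc n"] by (simp add: field_simps)
  qed
  thus ?thesis by (simp add: summable_Suc_iff)
qed

lemma d_summable:
  assumes u: "0 < u"
  shows "summable (\<lambda>k. dk \<mu> \<Lambda> x k u)"
proof -
  define r where "r = exp (- \<Lambda> * u)"
  have r0: "0 \<le> r" "r < 1" using L0 u by (auto simp: r_def)
  have "summable (\<lambda>k. (real k + 2) * r ^ k)" by (rule summable_n_geom[OF r0])
  thus ?thesis
  proof (rule summable_comparison_test'[where N=0])
    fix k :: nat
    have e1: "exp (- Bk \<mu> \<Lambda> x k * u) \<ge> 0" by simp
    have "Ak \<mu> \<Lambda> x k * u \<ge> \<Lambda> * u * real k"
    proof -
      have "real k \<le> real k * real k" by (cases k) auto
      hence "\<Lambda> * real k \<le> \<Lambda> * real k * real k" using L0 by (simp add: mult.assoc)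
      also have "\<dots> \<le> Ak \<mu> \<Lambda> x k" using A_ge[of k] x0 by simp
      finally show ?thesis using u by (simp add: mult_right_mono algebra_simps)
    qed
    hence eA: "exp (- Ak \<mu> \<Lambda> x k * u) \<le> r ^ k"
      by (simp add: r_def flip: exp_of_nat_mult) (simp add: algebra_simps)
    have "dk \<mu> \<Lambda> x k u \<le> (1 - \<mu>) * exp (- Ak \<mu> \<Lambda> x k * u) + (real k + 1 - \<mu>/2) * exp (- Ak \<mu> \<Lambda> x k * u)"
    proof -
      have "(real k + 1 - \<mu>/2) * (exp (- Ak \<mu> \<Lambda> x k * u) - exp (- Bk \<mu> \<Lambda> x k * u)) \<le> (real k + 1 - \<mu>/2) * exp (- Ak \<mu> \<Lambda> x k * u)"
        using beta_pos[of k] e1 by (intro mult_left_mono) auto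
      thus ?thesis unfolding dk_def by linarith
    qed
    also have "\<dots> = (real k + 2 - 3 * \<mu> / 2) * exp (- Ak \<mu> \<Lambda> x k * u)" by (simp add: algebra_simps)
    also have "\<dots> \<le> (real k + 2) * r ^ k"
      using eA mu0 mu1 by (intro mult_mono) auto
    finally show "norm (dk \<mu> \<Lambda> x k u) \<le> (real k + 2) * r ^ k"
      using g_le_d(2)[of u k] u by simp
  qed
qed

lemma g_summable:
  assumes u: "0 < u"
  shows "summable (\<lambda>k. gk \<mu> \<Lambda> x k u)"
  by (rule summable_comparison_test'[OF d_summable[OF u], where N=0]) (use g_le_d u in auto)

end


context
  fixes \<mu> \<Lambda> x :: real
  assumes mu0: "0 < \<mu>" and mu1: "\<mu> < 1" and L0: "0 < \<Lambda>" and x0: "0 < x"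
begin

lemma series_integral:
  shows "((\<lambda>u. \<Sum>k. gk \<mu> \<Lambda> x k u) has_integral integral {0<..} (\<lambda>u. \<Sum>k. gk \<mu> \<Lambda> x k u)) {0<..}"
    "Ik \<mu> \<Lambda> x sums integral {0<..} (\<lambda>u. \<Sum>k. gk \<mu> \<Lambda> x k u)"
proof -
  note ctx = mu0 mu1 L0 x0
  define S :: "real set" where "S = {0<..}"
  define h where "h u = (\<Sum>k. dk \<mu> \<Lambda> x k u)" for u
  have hint: "(h has_integral (\<Sum>k. Dk \<mu> \<Lambda> x k)) S"
  proof (rule has_integral_monotone_convergence_increasing)
    show "((\<lambda>u. \<Sum>k<N. dk \<mu> \<Lambda> x k u) has_integral (\<Sum>k<N. Dk \<mu> \<Lambda> x k)) S" for N
      unfolding S_def by (intro has_integral_sum d_int[OF ctx]) auto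
    show "(\<Sum>k<N. dk \<mu> \<Lambda> x k u) \<le> (\<Sum>k<Suc N. dk \<mu> \<Lambda> x k u)" if "u \<in> S" for N u
      using g_le_d(2)[OF ctx, of u N] that by (simp add: S_def)
    show "(\<lambda>N. \<Sum>k<N. dk \<mu> \<Lambda> x k u) \<longlonglongrightarrow> h u" if "u \<in> S" for u
      unfolding h_def by (rule summable_LIMSEQ) (rule d_summable[OF ctx], use that in \<open>simp add: S_def\<close>)
    show "(\<lambda>N. \<Sum>k<N. Dk \<mu> \<Lambda> x k) \<longlonglongrightarrow> (\<Sum>k. Dk \<mu> \<Lambda> x k)"
      by (rule summable_LIMSEQ) (rule D_summable[OF ctx])
  qed
  have p1: "(\<lambda>u. \<Sum>k<N. gk \<mu> \<Lambda> x k u) integrable_on S" for N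
    unfolding S_def by (intro integrable_sum has_integral_integrable[OF g_int[OF ctx]]) auto
  have p2: "h integrable_on S" using hint by blast
  have p3: "norm (\<Sum>k<N. gk \<mu> \<Lambda> x k u) \<le> h u" if "u \<in> S" for N u
  proof -
    have u: "0 < u" using that by (simp add: S_def)
    have "norm (\<Sum>k<N. gk \<mu> \<Lambda> x k u) \<le> (\<Sum>k<N. \<bar>gk \<mu> \<Lambda> x k u\<bar>)"
      by (simp add: sum_abs)
    also have "\<dots> \<le> (\<Sum>k<N. dk \<mu> \<Lambda> x k u)"
      by (intro sum_mono g_le_d(1)[OF ctx]) (use u in simp)
    also have "\<dots> \<le> h u" unfolding h_def
      by (intro sum_le_suminf d_summable[OF ctx u] g_le_d(2)[OF ctx]) (use u in auto)
    finally show ?thesis .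
  qed
  have p4: "(\<lambda>N. \<Sum>k<N. gk \<mu> \<Lambda> x k u) \<longlonglongrightarrow> (\<Sum>k. gk \<mu> \<Lambda> x k u)" if "u \<in> S" for u
    by (rule summable_LIMSEQ) (rule g_summable[OF ctx], use that in \<open>simp add: S_def\<close>)
  note dc = dominated_convergence[where f="\<lambda>N u. \<Sum>k<N. gk \<mu> \<Lambda> x k u" and h=h and S=S
     and g="\<lambda>u. \<Sum>k. gk \<mu> \<Lambda> x k u", OF p1 p2 p3 p4]
  have ieq: "integral S (\<lambda>u. \<Sum>k<N. gk \<mu> \<Lambda> x k u) = (\<Sum>k<N. Ik \<mu> \<Lambda> x k)" for N
    unfolding S_def by (intro integral_unique has_integral_sum g_int[OF ctx]) auto
  show "((\<lambda>u. \<Sum>k. gk \<mu> \<Lambda> x k u) has_integral integral {0<..} (\<lambda>u. \<Sum>k. gk \<mu> \<Lambda> x k u)) {0<..}"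
    using integrable_integral[OF dc(1)] by (simp add: S_def)
  show "Ik \<mu> \<Lambda> x sums integral {0<..} (\<lambda>u. \<Sum>k. gk \<mu> \<Lambda> x k u)"
  proof -
    have "(\<lambda>N. \<Sum>k<N. Ik \<mu> \<Lambda> x k) \<longlonglongrightarrow> integral S (\<lambda>u. \<Sum>k. gk \<mu> \<Lambda> x k u)"
      using dc(2) unfolding ieq .
    thus ?thesis unfolding sums_def S_def .
  qed
qed

end


lemma theta_series:
  fixes \<mu> \<Lambda> x u :: real
  assumes mu0: "0 < \<mu>" and mu1: "\<mu> < 1" and L0: "0 < \<Lambda>" and x0: "0 < x" and u: "0 < u"
  shows "theta_mu \<mu> (exp (- \<Lambda> * u)) * exp (- u * x) = (\<Sum>k. gk \<mu> \<Lambda> x k u)"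
proof -
  define q where "q = exp (- \<Lambda> * u)"
  define F where "F n = (of_int n + \<mu> / 2) * q powr (of_int n * (of_int n + \<mu>))" for n :: int
  have Fe: "F n = (of_int n + \<mu> / 2) * exp (- (\<Lambda> * u) * (of_int n * (of_int n + \<mu>)))" for n
    by (simp add: F_def q_def powr_def)
  define r where "r = exp (- \<Lambda> * u)"
  have r0: "0 \<le> r" "r < 1" using L0 u by (auto simp: r_def)
  have sg: "summable (\<lambda>k. (real k + 2) * r ^ k)" by (rule summable_n_geom[OF r0])
  have ek: "exp (- (\<Lambda> * u) * y) \<le> r ^ k" if "real k \<le> y" for k y
  proof -
    have "\<Lambda> * u * real k \<le> \<Lambda> * u * y" using that L0 u by (intro mult_left_mono) auto
    thus ?thesis by (simp add: r_def flip: exp_of_nat_mult) (simp add: algebra_simps)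
  qed
  define p where "p k = F (int k)" for k
  define m where "m k = F (- int k - 1)" for k
  have pb: "norm (p k) \<le> (real k + 2) * r ^ k" for k
  proof -
    have "real k \<le> real k * (real k + \<mu>)" using mu0 by (cases k) (auto simp: algebra_simps)
    hence "exp (- (\<Lambda> * u) * (real k * (real k + \<mu>))) \<le> r ^ k" by (rule ek)
    moreover have "\<bar>real k + \<mu> / 2\<bar> \<le> real k + 2" using mu0 mu1 by simp
    ultimately show ?thesis unfolding p_def Fe
      by (simp add: abs_mult) (intro mult_mono, auto)
  qed
  have mb: "norm (m k) \<le> (real k + 2) * r ^ k" for k
  proof -
    have e: "of_int (- int k - 1) * (of_int (- int k - 1) + \<mu>) = (real k + 1) * (real k + 1 - \<mu>)"
      by (simp add: algebra_simps)
    have "(real k + 1) * (real k + 1 - \<mu>) \<ge> (real k + 1) * real k" using mu1 by (intro mult_left_mono) auto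
    moreover have "real k \<le> (real k + 1) * real k" by (simp add: algebra_simps)
    ultimately have "real k \<le> (real k + 1) * (real k + 1 - \<mu>)" by linarith
    hence "exp (- (\<Lambda> * u) * ((real k + 1) * (real k + 1 - \<mu>))) \<le> r ^ k" by (rule ek)
    moreover have "\<bar>of_int (- int k - 1) + \<mu> / 2\<bar> \<le> real k + 2" using mu0 mu1 by simp
    ultimately show ?thesis unfolding m_def Fe e
      unfolding real_norm_def abs_mult abs_exp_cancel by (intro mult_mono) auto
  qed
  have sp: "summable (\<lambda>k. norm (p k))" by (rule summable_comparison_test'[OF sg, where N=0]) (use pb in auto)
  have sm: "summable (\<lambda>k. norm (m k))" by (rule summable_comparison_test'[OF sg, where N=0]) (use mb in auto)
  have hp: "(p has_sum (\<Sum>k. p k)) UNIV"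
    by (rule norm_summable_imp_has_sum[OF sp]) (rule summable_sums[OF summable_norm_cancel[OF sp]])
  have hm: "(m has_sum (\<Sum>k. m k)) UNIV"
    by (rule norm_summable_imp_has_sum[OF sm]) (rule summable_sums[OF summable_norm_cancel[OF sm]])
  have i1: "inj (\<lambda>k::nat. int k)" by (simp add: inj_on_def)
  have i2: "inj (\<lambda>k::nat. - int k - 1)" by (simp add: inj_on_def)
  have hp': "(F has_sum (\<Sum>k. p k)) (range (\<lambda>k::nat. int k))"
  proof -
    have "F \<circ> (\<lambda>k::nat. int k) = p" by (simp add: fun_eq_iff p_def)
    thus ?thesis using hp by (subst has_sum_reindex[OF i1]) simp
  qed
  have hm': "(F has_sum (\<Sum>k. m k)) (range (\<lambda>k::nat. - int k - 1))"
  proof -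
    have "F \<circ> (\<lambda>k::nat. - int k - 1) = m" by (simp add: fun_eq_iff m_def)
    thus ?thesis using hm by (subst has_sum_reindex[OF i2]) simp
  qed
  have un: "range (\<lambda>k::nat. int k) \<union> range (\<lambda>k::nat. - int k - 1) = UNIV"
  proof -
    have "n \<in> range (\<lambda>k::nat. int k) \<union> range (\<lambda>k::nat. - int k - 1)" for n :: int
    proof (cases "n \<ge> 0")
      case True thus ?thesis by (auto intro!: image_eqI[where x="nat n"])
    next
      case False thus ?thesis by (auto intro!: image_eqI[where x="nat (- n - 1)"])
    qed
    thus ?thesis by auto
  qed
  have dj: "range (\<lambda>k::nat. int k) \<inter> range (\<lambda>k::nat. - int k - 1) = {}" by auto
  have "(F has_sum ((\<Sum>k. p k) + (\<Sum>k. m k))) UNIV"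
    using has_sum_Un_disjoint[OF hp' hm' dj] un by simp
  hence th: "theta_mu \<mu> (exp (- \<Lambda> * u)) = (\<Sum>k. p k) + (\<Sum>k. m k)"
    unfolding theta_mu_def using infsumI by (simp add: F_def[abs_def] q_def)
  also have "\<dots> = (\<Sum>k. p k + m k)"
    by (rule suminf_add) (use summable_norm_cancel[OF sp] summable_norm_cancel[OF sm] in auto)
  finally have "theta_mu \<mu> (exp (- \<Lambda> * u)) * exp (- u * x) = (\<Sum>k. (p k + m k) * exp (- u * x))"
    by (simp add: suminf_mult2 summable_add summable_norm_cancel[OF sp] summable_norm_cancel[OF sm])
  also have "(\<lambda>k. (p k + m k) * exp (- u * x)) = (\<lambda>k. gk \<mu> \<Lambda> x k u)"
  proof
    fix k
    have e: "of_int (- int k - 1) * (of_int (- int k - 1) + \<mu>) = (real k + 1) * (real k + 1 - \<mu>)"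
      by (simp add: algebra_simps)
    have e2: "of_int (- int k - 1) + \<mu> / 2 = - (real k + 1 - \<mu> / 2)" by simp
    have "p k * exp (- u * x) = (real k + \<mu>/2) * exp (- Ak \<mu> \<Lambda> x k * u)"
      unfolding p_def Fe Ak_def by (simp add: mult.assoc flip: exp_add) (simp add: algebra_simps)
    moreover have "m k * exp (- u * x) = - ((real k + 1 - \<mu>/2) * exp (- Bk \<mu> \<Lambda> x k * u))"
      unfolding m_def Fe Bk_def e e2 by (simp add: mult.assoc flip: exp_add) (simp add: algebra_simps)
    ultimately show "(p k + m k) * exp (- u * x) = gk \<mu> \<Lambda> x k u"
      unfolding gk_def by (simp add: algebra_simps)
  qed
  finally show ?thesis .
qed



lemma pf_aux:
  fixes al a L :: complex
  assumes "L \<noteq> 0" "al - a \<noteq> 0" "al + a \<noteq> 0"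
  shows "al / (L * ((al - a) * (al + a))) = (1 / (2 * L)) * (1 / (al - a) + 1 / (al + a))"
  using assms by (simp add: field_simps)

lemma not_Int_shift:
  fixes b :: complex
  assumes "b \<notin> \<int>"
  shows "b + of_nat k \<noteq> 0" "of_nat k + 1 - b \<noteq> 0"
proof -
  show "b + of_nat k \<noteq> 0"
  proof
    assume "b + of_nat k = 0" hence "b = - of_nat k" by (simp add: eq_neg_iff_add_eq_0)
    thus False using assms by (metis Ints_minus Ints_of_nat)
  qed
  show "of_nat k + 1 - b \<noteq> 0"
  proof
    assume "of_nat k + 1 - b = 0" hence "b = of_nat (Suc k)" by (simp add: algebra_simps)
    thus False using assms by (metis Ints_of_nat)
  qed
qed

lemma series_part:
  fixes \<mu> \<Lambda> x :: real
  assumes mu: "0 < \<mu>" "\<mu> < 1" and L: "0 < \<Lambda>" and x: "0 < x"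
  shows "(\<lambda>k. (real k + \<mu>/2) / (\<Lambda> * real k * (real k + \<mu>) + x)
             - (real k + 1 - \<mu>/2) / (\<Lambda> * (real k + 1) * (real k + 1 - \<mu>) + x))
      sums ((1 / \<Lambda>) * (pi * sin (pi * \<mu>) / (cos_pi_sqrt (\<mu>\<^sup>2 - 4 * x / \<Lambda>) - cos (pi * \<mu>))))"
proof -
  define c where "c = \<mu>^2/4 - x/\<Lambda>"
  define a :: complex where "a = (if c \<ge> 0 then of_real (sqrt c) else \<i> * of_real (sqrt (-c)))"
  define b1 where "b1 = of_real (\<mu>/2) - a"
  define b2 where "b2 = of_real (\<mu>/2) + a"
  have a2: "a^2 = of_real c"
  proof (cases "c \<ge> 0")
    case True thus ?thesis by (simp add: a_def flip: of_real_power)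
  next
    case False
    have "a^2 = \<i>^2 * of_real ((sqrt (-c))^2)" using False by (simp add: a_def power_mult_distrib flip: of_real_power)
    also have "\<dots> = of_real c" using False by simp
    finally show ?thesis .
  qed
  have cl: "c < \<mu>^2/4" using x L by (simp add: c_def)
  have nInt: "b \<notin> \<int>" if "b = b1 \<or> b = b2" for b
  proof
    assume "b \<in> \<int>"
    then obtain n where n: "b = of_int n" by (auto elim: Ints_cases)
    show False
    proof (cases "c \<ge> 0")
      case True
      have "sqrt c < sqrt (\<mu>^2/4)" using cl True by (subst real_sqrt_less_iff) simp
      also have "sqrt (\<mu>^2/4) = \<mu>/2" using mu by (simp add: real_sqrt_divide)
      finally have sc: "sqrt c < \<mu>/2" .
      have "Re b = of_int n" using n by simp
      moreover have "Re b = \<mu>/2 - sqrt c \<or> Re b = \<mu>/2 + sqrt c"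
        using that True by (auto simp: b1_def b2_def a_def)
      hence "0 < Re b \<and> Re b < 1" using sc mu real_sqrt_ge_zero[OF True] by linarith
      ultimately show False by (metis of_int_0_less_iff of_int_less_1_iff zless_imp_add1_zle not_le add_0 of_int_1 zero_less_one)
    next
      case False
      have "Im b = 0" using n by simp
      moreover have "Im b \<noteq> 0" using that False by (auto simp: b1_def b2_def a_def)
      ultimately show False by simp
    qed
  qed
  have nb1: "b1 \<notin> \<int>" and nb2: "b2 \<notin> \<int>" using nInt by auto
  define T where "T k = (1 / (2 * of_real \<Lambda>)) * ((1 / (b1 + of_nat k) - 1 / (of_nat k + 1 - b1))
                       + (1 / (b2 + of_nat k) - 1 / (of_nat k + 1 - b2)))" for k
  have S: "T sums ((1 / (2 * of_real \<Lambda>)) * (of_real pi * cot (of_real pi * b1) + of_real pi * cot (of_real pi * b2)))"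
    unfolding T_def by (intro sums_mult sums_add cot_series nb1 nb2)
  have Lc: "(of_real \<Lambda> :: complex) \<noteq> 0" using L by simp
  have keyr: "\<Lambda> * (y^2 - c) = \<Lambda> * (y - \<mu>/2) * (y - \<mu>/2 + \<mu>) + x" for y
    using L by (simp add: c_def field_simps power2_eq_square)
  have keyc: "of_real (\<Lambda> * (y - \<mu>/2) * (y - \<mu>/2 + \<mu>) + x) = of_real \<Lambda> * ((of_real y - a) * (of_real y + a))" for y
  proof -
    have "(of_real y - a) * (of_real y + a) = of_real (y^2 - c)"
      using a2 by (simp add: algebra_simps power2_eq_square)
    thus ?thesis using keyr[of y] by (metis of_real_mult)
  qed
  have termeq: "of_real ((real k + \<mu>/2) / (\<Lambda> * real k * (real k + \<mu>) + x)
             - (real k + 1 - \<mu>/2) / (\<Lambda> * (real k + 1) * (real k + 1 - \<mu>) + x)) = T k" for k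
  proof -
    define K :: complex where "K = of_nat k"
    have e1: "of_real (\<Lambda> * real k * (real k + \<mu>) + x) = of_real \<Lambda> * ((of_real (real k + \<mu>/2) - a) * (of_real (real k + \<mu>/2) + a))"
      using keyc[of "real k + \<mu>/2"] by simp
    have e2: "of_real (\<Lambda> * (real k + 1) * (real k + 1 - \<mu>) + x) = of_real \<Lambda> * ((of_real (real k + 1 - \<mu>/2) - a) * (of_real (real k + 1 - \<mu>/2) + a))"
      using keyc[of "real k + 1 - \<mu>/2"] by (simp add: algebra_simps)
    have d1: "of_real (real k + \<mu>/2) - a = b1 + K" by (simp add: b1_def K_def algebra_simps)
    have d2: "of_real (real k + \<mu>/2) + a = b2 + K" by (simp add: b2_def K_def algebra_simps)
    have d3: "of_real (real k + 1 - \<mu>/2) - a = K + 1 - b2" by (simp add: b2_def K_def algebra_simps)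
    have d4: "of_real (real k + 1 - \<mu>/2) + a = K + 1 - b1" by (simp add: b1_def K_def algebra_simps)
    have n1: "b1 + K \<noteq> 0" "b2 + K \<noteq> 0" "K + 1 - b1 \<noteq> 0" "K + 1 - b2 \<noteq> 0"
      using not_Int_shift[OF nb1, of k] not_Int_shift[OF nb2, of k] by (simp_all add: K_def)
    have "of_real ((real k + \<mu>/2) / (\<Lambda> * real k * (real k + \<mu>) + x)) =
          of_real (real k + \<mu>/2) / (of_real \<Lambda> * ((of_real (real k + \<mu>/2) - a) * (of_real (real k + \<mu>/2) + a)))"
      by (simp only: of_real_divide e1)
    also have "\<dots> = (1 / (2 * of_real \<Lambda>)) * (1 / (b1 + K) + 1 / (b2 + K))"
      using pf_aux[OF Lc, of "of_real (real k + \<mu>/2)" a, unfolded d1 d2] n1 unfolding d1 d2 by blast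
    finally have t1: "of_real ((real k + \<mu>/2) / (\<Lambda> * real k * (real k + \<mu>) + x)) = (1 / (2 * of_real \<Lambda>)) * (1 / (b1 + K) + 1 / (b2 + K))" .
    have "of_real ((real k + 1 - \<mu>/2) / (\<Lambda> * (real k + 1) * (real k + 1 - \<mu>) + x)) =
          of_real (real k + 1 - \<mu>/2) / (of_real \<Lambda> * ((of_real (real k + 1 - \<mu>/2) - a) * (of_real (real k + 1 - \<mu>/2) + a)))"
      by (simp only: of_real_divide e2)
    also have "\<dots> = (1 / (2 * of_real \<Lambda>)) * (1 / (K + 1 - b2) + 1 / (K + 1 - b1))"
      using pf_aux[OF Lc, of "of_real (real k + 1 - \<mu>/2)" a, unfolded d3 d4] n1 unfolding d3 d4 by blast
    finally have t2: "of_real ((real k + 1 - \<mu>/2) / (\<Lambda> * (real k + 1) * (real k + 1 - \<mu>) + x)) = (1 / (2 * of_real \<Lambda>)) * (1 / (K + 1 - b2) + 1 / (K + 1 - b1))" .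
    show ?thesis unfolding of_real_diff t1 t2 T_def K_def[symmetric] by (simp add: algebra_simps)
  qed
  define P :: complex where "P = of_real pi"
  define s1 where "s1 = sin (P * b1)"
  define s2 where "s2 = sin (P * b2)"
  have s1nz: "s1 \<noteq> 0" using nb1 unfolding s1_def P_def by (subst sin_eq_0) auto
  have s2nz: "s2 \<noteq> 0" using nb2 unfolding s2_def P_def by (subst sin_eq_0) auto
  have sum12: "P * b1 + P * b2 = of_real (pi * \<mu>)" by (simp add: P_def b1_def b2_def algebra_simps)
  have dif12: "P * b1 - P * b2 = - (2 * of_real pi * a)" by (simp add: P_def b1_def b2_def algebra_simps)
  have cotsum: "cot (P * b1) + cot (P * b2) = of_real (sin (pi * \<mu>)) / (s1 * s2)"
  proof -
    have "cot (P * b1) + cot (P * b2) = sin (P * b1 + P * b2) / (s1 * s2)"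
      using s1nz s2nz by (simp add: cot_def s1_def s2_def sin_add field_simps)
    thus ?thesis by (simp only: sum12 sin_of_real)
  qed
  have prod12: "2 * (s1 * s2) = of_real (cos_pi_sqrt (\<mu>\<^sup>2 - 4 * x / \<Lambda>) - cos (pi * \<mu>))"
  proof -
    have "2 * (s1 * s2) = cos (P * b1 - P * b2) - cos (P * b1 + P * b2)"
      by (simp add: s1_def s2_def cos_diff cos_add)
    also have "cos (P * b1 - P * b2) = of_real (cos_pi_sqrt (4 * c))"
      unfolding dif12 cos_minus by (rule cos_pi_sqrt_complex[OF a2])
    also have "4 * c = \<mu>\<^sup>2 - 4 * x / \<Lambda>" by (simp add: c_def)
    also have "cos (P * b1 + P * b2) = of_real (cos (pi * \<mu>))" by (simp only: sum12 cos_of_real)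
    finally show ?thesis by simp
  qed
  have V: "(1 / (2 * of_real \<Lambda>)) * (of_real pi * cot (of_real pi * b1) + of_real pi * cot (of_real pi * b2))
     = (of_real ((1 / \<Lambda>) * (pi * sin (pi * \<mu>) / (cos_pi_sqrt (\<mu>\<^sup>2 - 4 * x / \<Lambda>) - cos (pi * \<mu>)))) :: complex)"
  proof -
    have "(1 / (2 * of_real \<Lambda>)) * (of_real pi * cot (of_real pi * b1) + of_real pi * cot (of_real pi * b2))
       = (1 / (2 * of_real \<Lambda>)) * (P * (of_real (sin (pi * \<mu>)) / (s1 * s2)))"
    proof -
      have "of_real pi * cot (of_real pi * b1) + of_real pi * cot (of_real pi * b2) = P * (cot (P * b1) + cot (P * b2))"
        unfolding P_def by (simp add: algebra_simps)
      thus ?thesis using cotsum by simp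
    qed
    also have "\<dots> = (1 / of_real \<Lambda>) * (P * of_real (sin (pi * \<mu>)) / (2 * (s1 * s2)))"
      using s1nz s2nz Lc by (simp add: field_simps)
    also have "\<dots> = of_real ((1 / \<Lambda>) * (pi * sin (pi * \<mu>) / (cos_pi_sqrt (\<mu>\<^sup>2 - 4 * x / \<Lambda>) - cos (pi * \<mu>))))"
      unfolding prod12 P_def by simp
    finally show ?thesis .
  qed
  have "(\<lambda>k. of_real ((real k + \<mu>/2) / (\<Lambda> * real k * (real k + \<mu>) + x)
             - (real k + 1 - \<mu>/2) / (\<Lambda> * (real k + 1) * (real k + 1 - \<mu>) + x)) :: complex)
      sums of_real ((1 / \<Lambda>) * (pi * sin (pi * \<mu>) / (cos_pi_sqrt (\<mu>\<^sup>2 - 4 * x / \<Lambda>) - cos (pi * \<mu>))))"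
    using S unfolding termeq V .
  thus ?thesis by (simp only: sums_of_real_iff)
qed


theorem mainTheorem14:
  fixes \<mu> \<Lambda> x :: real
  assumes "0 < \<mu>" and "\<mu> < 1" and "0 < \<Lambda>" and "0 < x"
  shows "((\<lambda>u. theta_mu \<mu> (exp (- \<Lambda> * u)) * exp (- u * x)) has_integral
           (1 / \<Lambda>) * (pi * sin (pi * \<mu>) /
             (cos_pi_sqrt (\<mu>\<^sup>2 - 4 * x / \<Lambda>) - cos (pi * \<mu>)))) {0..}"
proof -
  note ctx = assms
  define J where "J = integral {0<..} (\<lambda>u. \<Sum>k. gk \<mu> \<Lambda> x k u)"
  have h1: "((\<lambda>u. \<Sum>k. gk \<mu> \<Lambda> x k u) has_integral J) {0<..}"
    using series_integral(1)[OF ctx] by (simp add: J_def)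
  have s1: "Ik \<mu> \<Lambda> x sums J" using series_integral(2)[OF ctx] by (simp add: J_def)
  have s2: "Ik \<mu> \<Lambda> x sums ((1 / \<Lambda>) * (pi * sin (pi * \<mu>) / (cos_pi_sqrt (\<mu>\<^sup>2 - 4 * x / \<Lambda>) - cos (pi * \<mu>))))"
    using series_part[OF ctx] by (simp add: Ik_def[abs_def] Ak_def Bk_def)
  have JR: "J = (1 / \<Lambda>) * (pi * sin (pi * \<mu>) / (cos_pi_sqrt (\<mu>\<^sup>2 - 4 * x / \<Lambda>) - cos (pi * \<mu>)))"
    using sums_unique2[OF s1 s2] .
  have "((\<lambda>u. theta_mu \<mu> (exp (- \<Lambda> * u)) * exp (- u * x)) has_integral J) {0<..}"
  proof (rule has_integral_eq[OF _ h1])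
    fix u :: real assume "u \<in> {0<..}"
    hence u: "0 < u" by simp
    show "(\<Sum>k. gk \<mu> \<Lambda> x k u) = theta_mu \<mu> (exp (- \<Lambda> * u)) * exp (- u * x)"
      using theta_series[OF ctx u] by (rule sym)
  qed
  thus ?thesis unfolding JR by (simp add: has_integral_open_half)
qed


end
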